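(* Let $P$ be a probability distribution on $\mathcal{X}\times\{+1,-1\}$ such that for some $\varepsilon>0$, $P(\{x\in\mathcal{X}:\varepsilon\le P(+1|x)\le 1-\varepsilon\})>0$. Let $\ell:\mathbb{R}\to\mathbb{R}$ be non-decreasing, convex and non-negative, and suppose that for every $M>0$ there is $z_0$ such that $g\ge M$ for all $z\ge z_0$ and all $g\in\partial\ell(z)$. Define, for measurable $f:\mathcal{X}\to\mathbb{R}$ and $\rho\in\mathbb{R}$, $\mathcal{R}(f,\rho)=-2\rho+\mathbb{E}_P[\ell(\rho-yf(x))]$ and $\mathcal{R}^*=\inf\{\mathcal{R}(f,\rho): f\in L_0(\mathcal{X}),\rho\in\mathbb{R}\}$. Then $\mathcal{R}^*>-\infty$.
   Context: $P(y|x)$ denotes the conditional probability of label $y$ given input $x$; $L_0(\mathcal{X})$ is the set of measurable functions on $\mathcal{X}$; $\partial\ell(z)$ is the subdifferential of $\ell$ at $z$. *)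

theory Defs
  imports "HOL-Probability.Probability"
begin

definition subdiff :: "(real \<Rightarrow> real) \<Rightarrow> real \<Rightarrow> real set" where
  "subdiff l z = {g. \<forall>w. l w \<ge> l z + g * (w - z)}"

definition label :: "bool \<Rightarrow> real" where
  "label b = (if b then 1 else -1)"

text \<open>Risk R(f,rho) = -2 rho + E_P[l(rho - y f(x))], valued in the extended reals
  (the expectation of the non-negative loss may be +infinity).\<close>
definition risk :: "('a \<times> bool) measure \<Rightarrow> (real \<Rightarrow> real) \<Rightarrow> ('a \<Rightarrow> real) \<Rightarrow> real \<Rightarrow> ereal" where
  "risk P l f \<rho> = ereal (-2 * \<rho>) +
     enn2ereal (\<integral>\<^sup>+ p. ennreal (l (\<rho> - label (snd p) * f (fst p))) \<partial>P)"

end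

theory Submission imports Defs begin

lemma slope_mono3:
  fixes l :: "real \<Rightarrow> real"
  assumes cv: "convex_on UNIV l" and "x < t" "t < y"
  shows "(l t - l x) / (t - x) \<le> (l y - l t) / (y - t)"
proof -
  have "(l x - l t) / (x - t) \<le> (l t - l y) / (t - y)"
    using convex_on_slope_le[OF cv, of x y t] assms by auto
  moreover have "(l x - l t) / (x - t) = (l t - l x) / (t - x)"
    by (metis minus_diff_eq minus_divide_divide)
  moreover have "(l t - l y) / (t - y) = (l y - l t) / (y - t)"
    by (metis minus_diff_eq minus_divide_divide)
  ultimately show ?thesis by simp
qed

lemma subdiff_nonempty:
  fixes l :: "real \<Rightarrow> real"
  assumes cv: "convex_on UNIV l"
  shows "\<exists>g. g \<in> subdiff l z"
proof -
  define Sl where "Sl = {(l z - l w) / (z - w) | w. w < z}"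
  have ne: "Sl \<noteq> {}" unfolding Sl_def by (auto intro: exI[of _ "z - 1"])
  have le: "s \<le> (l v - l z) / (v - z)" if "s \<in> Sl" "z < v" for s v
  proof -
    from that obtain w where w: "w < z" "s = (l z - l w) / (z - w)" unfolding Sl_def by auto
    show ?thesis using slope_mono3[OF cv w(1) \<open>z < v\<close>] w by simp
  qed
  have bdd: "bdd_above Sl" using le[of _ "z+1"] by (intro bdd_aboveI[of _ "(l (z+1) - l z) / (z + 1 - z)"]) auto
  define g where "g = Sup Sl"
  have "l w \<ge> l z + g * (w - z)" for w
  proof (cases w z rule: linorder_cases)
    case less
    have "(l z - l w) / (z - w) \<le> g" unfolding g_def
      by (rule cSup_upper[OF _ bdd]) (use less in \<open>auto simp: Sl_def\<close>)
    then have "l z - l w \<le> g * (z - w)" using less by (simp add: divide_le_eq)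
    then show ?thesis by (simp add: algebra_simps)
  next
    case equal then show ?thesis by simp
  next
    case greater
    have "g \<le> (l w - l z) / (w - z)" unfolding g_def
      by (rule cSup_least[OF ne]) (use le greater in auto)
    then have "g * (w - z) \<le> l w - l z" using greater by (simp add: le_divide_eq)
    then show ?thesis by (simp add: algebra_simps)
  qed
  then show ?thesis unfolding subdiff_def by auto
qed

lemma real_bound:
  fixes l :: "real \<Rightarrow> real" and c :: real
  assumes cv: "convex_on UNIV l" and nn: "\<forall>z. l z \<ge> 0" and c: "c > 0"
    and gr: "\<forall>B>0. \<exists>z0. \<forall>z\<ge>z0. \<forall>g\<in>subdiff l z. g \<ge> B"
  shows "\<exists>K. \<forall>\<rho>. -2*\<rho> + c * l \<rho> \<ge> -K"
proof -
  have "4 / c > 0" using c by simp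
  then obtain z0 where z0: "\<forall>z\<ge>z0. \<forall>g\<in>subdiff l z. g \<ge> 4 / c" using gr by blast
  define z1 where "z1 = max z0 0"
  have z1p: "z1 \<ge> 0" unfolding z1_def by simp
  obtain g where g: "g \<in> subdiff l z1" using subdiff_nonempty[OF cv] by blast
  have gB: "g \<ge> 4 / c" using z0 g z1_def by (meson max.cobounded1)
  have "-2*\<rho> + c * l \<rho> \<ge> -(4*z1)" for \<rho>
  proof (cases "\<rho> \<ge> z1")
    case True
    have "l \<rho> \<ge> l z1 + g * (\<rho> - z1)" using g by (auto simp: subdiff_def)
    moreover have "g * (\<rho> - z1) \<ge> 4 / c * (\<rho> - z1)" using gB True by (intro mult_right_mono) auto
    ultimately have "l \<rho> \<ge> 4 / c * (\<rho> - z1)" using nn by (smt (verit))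
    then have "c * l \<rho> \<ge> c * (4 / c * (\<rho> - z1))" using c by (intro mult_left_mono) auto
    moreover have "c * (4 / c * (\<rho> - z1)) = 4 * (\<rho> - z1)" using c by simp
    ultimately have "c * l \<rho> \<ge> 4 * (\<rho> - z1)" by simp
    then show ?thesis using True z1p by (smt (verit))
  next
    case False
    have "c * l \<rho> \<ge> 0" using c nn by simp
    then show ?thesis using False z1p by linarith
  qed
  then show ?thesis by blast
qed

theorem lemma2:
  fixes M :: "'a measure" and P :: "('a \<times> bool) measure"
    and \<eta> :: "'a \<Rightarrow> real" and l :: "real \<Rightarrow> real" and \<epsilon> :: real
  assumes "prob_space P"
    and "sets P = sets (M \<Otimes>\<^sub>M count_space UNIV)"
    and "\<eta> \<in> borel_measurable M"
    and "\<And>A. A \<in> sets M \<Longrightarrow>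
           measure P (A \<times> {True}) = set_lebesgue_integral (distr P M fst) A \<eta>"
    and "\<epsilon> > 0"
    and "measure (distr P M fst) {x \<in> space M. \<epsilon> \<le> \<eta> x \<and> \<eta> x \<le> 1 - \<epsilon>} > 0"
    and "mono l" and "convex_on UNIV l" and "\<forall>z. l z \<ge> 0"
    and "\<forall>B>0. \<exists>z0. \<forall>z\<ge>z0. \<forall>g\<in>subdiff l z. g \<ge> B"
  shows "(INF fr \<in> borel_measurable M \<times> UNIV. risk P l (fst fr) (snd fr)) > -\<infinity>"
proof -
  interpret P: prob_space P by fact
  define Px where "Px = distr P M fst"
  define S where "S = {x \<in> space M. \<epsilon> \<le> \<eta> x \<and> \<eta> x \<le> 1 - \<epsilon>}"
  define c where "c = measure Px S"
  have cpos: "c > 0" using assms(6) unfolding c_def Px_def S_def .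
  have spP: "space P = space M \<times> UNIV"
    using sets_eq_imp_space_eq[OF assms(2)] by (simp add: space_pair_measure)
  have fstm: "fst \<in> measurable P M"
    using measurable_cong_sets[OF assms(2) refl] measurable_fst by blast
  interpret Px: prob_space Px unfolding Px_def by (rule P.prob_space_distr[OF fstm])
  have setsPx: "sets Px = sets M" unfolding Px_def by simp
  have etam: "\<eta> \<in> borel_measurable Px"
    using measurable_cong_sets[OF setsPx refl] assms(3) by blast
  have Sm: "S \<in> sets M" unfolding S_def using assms(3) by measurable
  have prodm: "A \<times> B \<in> sets P" if "A \<in> sets M" for A B
    using that assms(2) by auto
  have PxA: "measure Px A = measure P (A \<times> UNIV)" if "A \<in> sets M" for A
  proof -
    have "fst -` A \<inter> space P = A \<times> UNIV" using spP sets.sets_into_space[OF that] by auto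
    then show ?thesis unfolding Px_def using measure_distr[OF fstm that] by simp
  qed
  have bnds: "\<epsilon> * measure Px A \<le> measure P (A \<times> {True}) \<and> measure P (A \<times> {True}) \<le> (1 - \<epsilon>) * measure Px A"
    if A: "A \<in> sets M" "A \<subseteq> S" for A
  proof -
    have Apx: "A \<in> sets Px" using A setsPx by simp
    have si: "set_integrable Px A \<eta>"
      unfolding set_integrable_def
    proof (rule Px.integrable_const_bound[where B=1])
      show "AE x in Px. norm (indicator A x *\<^sub>R \<eta> x) \<le> 1"
        using A \<open>\<epsilon> > 0\<close> by (intro AE_I2) (auto simp: S_def indicator_def)
      show "(\<lambda>x. indicator A x *\<^sub>R \<eta> x) \<in> borel_measurable Px"
        using etam Apx by measurable
    qed
    have sc: "set_integrable Px A (\<lambda>_. d)" for d :: real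
      unfolding set_integrable_def
    proof (rule Px.integrable_const_bound[where B="\<bar>d\<bar>"])
      show "AE x in Px. norm (indicator A x *\<^sub>R d) \<le> \<bar>d\<bar>"
        by (auto simp: indicator_def)
      show "(\<lambda>x. indicator A x *\<^sub>R d) \<in> borel_measurable Px"
        using Apx by measurable
    qed
    have e1: "set_lebesgue_integral Px A (\<lambda>_. \<epsilon>) \<le> set_lebesgue_integral Px A \<eta>"
      by (rule set_integral_mono[OF sc si]) (use A in \<open>auto simp: S_def\<close>)
    have e2: "set_lebesgue_integral Px A \<eta> \<le> set_lebesgue_integral Px A (\<lambda>_. 1 - \<epsilon>)"
      by (rule set_integral_mono[OF si sc]) (use A in \<open>auto simp: S_def\<close>)
    have c1: "set_lebesgue_integral Px A (\<lambda>_. d) = measure Px A * d" for d :: real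
      using set_integral_const[OF Apx, of d] Px.emeasure_finite[of A] by simp
    show ?thesis using e1 e2 c1 assms(4)[OF A(1)] unfolding Px_def by (auto simp: mult.commute)
  qed
  have TUm: "{x\<in>S. 0 \<le> f x} \<in> sets M \<and> {x\<in>S. f x < 0} \<in> sets M"
    if f: "f \<in> borel_measurable M" for f :: "'a \<Rightarrow> real"
  proof -
    have Ssp: "S \<subseteq> space M" unfolding S_def by auto
    have m1: "{x\<in>space M. 0 \<le> f x} \<in> sets M" using f borel_measurable_le[of "\<lambda>x. 0::real" M f] by simp
    have m2: "{x\<in>space M. f x < 0} \<in> sets M" using f by measurable
    have "{x\<in>S. 0 \<le> f x} = S \<inter> {x\<in>space M. 0 \<le> f x}" using Ssp by auto
    moreover have "{x\<in>S. f x < 0} = S \<inter> {x\<in>space M. f x < 0}" using Ssp by auto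
    ultimately show ?thesis using Sm m1 m2 by auto
  qed
  have meas: "measure P ({x\<in>S. 0 \<le> f x} \<times> {False} \<union> {x\<in>S. f x < 0} \<times> {True}) \<ge> \<epsilon> * c"
    if f: "f \<in> borel_measurable M" for f :: "'a \<Rightarrow> real"
  proof -
    define T where "T = {x\<in>S. 0 \<le> f x}"
    define U where "U = {x\<in>S. f x < 0}"
    have Ssp: "S \<subseteq> space M" unfolding S_def by auto
    have m1: "{x\<in>space M. 0 \<le> f x} \<in> sets M" using f borel_measurable_le[of "\<lambda>x. 0::real" M f] by simp
    have m2: "{x\<in>space M. f x < 0} \<in> sets M" using f by measurable
    have "T = S \<inter> {x\<in>space M. 0 \<le> f x}" unfolding T_def using Ssp by auto
    then have Tm: "T \<in> sets M" using Sm m1 by auto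
    have "U = S \<inter> {x\<in>space M. f x < 0}" unfolding U_def using Ssp by auto
    then have Um: "U \<in> sets M" using Sm m2 by auto
    have STU: "S = T \<union> U" "T \<inter> U = {}" unfolding T_def U_def by auto
    have cs: "c = measure Px T + measure Px U"
      unfolding c_def STU(1) by (rule Px.finite_measure_Union) (use Tm Um setsPx STU in auto)
    have W: "measure P (T \<times> {False} \<union> U \<times> {True}) = measure P (T \<times> {False}) + measure P (U \<times> {True})"
      by (rule P.finite_measure_Union) (use Tm Um prodm in auto)
    have TT: "measure P (T \<times> UNIV) = measure P (T \<times> {True}) + measure P (T \<times> {False})"
    proof -
      have "T \<times> UNIV = T \<times> {True} \<union> T \<times> {False}" by auto
      then show ?thesis using P.finite_measure_Union[of "T \<times> {True}" "T \<times> {False}"] Tm prodm by auto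
    qed
    have bT: "measure P (T \<times> {True}) \<le> (1 - \<epsilon>) * measure Px T" using bnds[OF Tm] T_def by auto
    have bU: "\<epsilon> * measure Px U \<le> measure P (U \<times> {True})" using bnds[OF Um] U_def by auto
    have "measure P (T \<times> {False}) \<ge> \<epsilon> * measure Px T" using TT bT PxA[OF Tm] by (simp add: algebra_simps)
    then show ?thesis using W bU cs unfolding T_def[symmetric] U_def[symmetric] by (simp add: algebra_simps)
  qed
  obtain K where K: "\<forall>\<rho>. -2*\<rho> + (\<epsilon> * c) * l \<rho> \<ge> -K"
    using real_bound[OF assms(8) assms(9) _ assms(10), of "\<epsilon> * c"] cpos assms(5) by auto
  have "risk P l f \<rho> \<ge> ereal (-K)" if f: "f \<in> borel_measurable M" for f \<rho>
  proof -
    define W where "W = {x\<in>S. 0 \<le> f x} \<times> {False} \<union> {x\<in>S. f x < 0} \<times> {True}"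
    have Wm: "W \<in> sets P" unfolding W_def using TUm[OF f] by (intro sets.Un prodm) auto
    have pw: "ennreal (l \<rho>) * indicator W p \<le> ennreal (l (\<rho> - label (snd p) * f (fst p)))" for p
    proof (cases "p \<in> W")
      case True
      then have "l \<rho> \<le> l (\<rho> - label (snd p) * f (fst p))"
      proof -
      have "\<rho> \<le> \<rho> - label (snd p) * f (fst p)" using True unfolding W_def by (auto simp: label_def)
      then show ?thesis using assms(7) by (simp add: monoD)
    qed
      then show ?thesis using True by (simp add: ennreal_leI)
    qed simp
    have "ennreal (l \<rho> * measure P W) = ennreal (l \<rho>) * emeasure P W"
      using assms(9) by (simp add: P.emeasure_eq_measure ennreal_mult)
    also have "\<dots> = (\<integral>\<^sup>+ p. ennreal (l \<rho>) * indicator W p \<partial>P)"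
      using nn_integral_cmult_indicator[OF Wm] by simp
    also have "\<dots> \<le> (\<integral>\<^sup>+ p. ennreal (l (\<rho> - label (snd p) * f (fst p))) \<partial>P)"
      by (rule nn_integral_mono) (rule pw)
    finally have i: "ereal (l \<rho> * measure P W) \<le> enn2ereal (\<integral>\<^sup>+ p. ennreal (l (\<rho> - label (snd p) * f (fst p))) \<partial>P)"
      using assms(9) by (simp add: less_eq_ennreal.rep_eq)
    have mW: "measure P W \<ge> \<epsilon> * c" using meas[OF f] unfolding W_def .
    have "-K \<le> -2*\<rho> + l \<rho> * measure P W"
    proof -
      have "l \<rho> * (\<epsilon> * c) \<le> l \<rho> * measure P W" using mW assms(9) by (simp add: mult_left_mono)
      then show ?thesis using K[rule_format, of \<rho>] by (simp add: mult.commute)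
    qed
    then have "ereal (-K) \<le> ereal (-2*\<rho>) + ereal (l \<rho> * measure P W)" by simp
    also have "\<dots> \<le> risk P l f \<rho>" unfolding risk_def by (rule add_left_mono[OF i])
    finally show ?thesis .
  qed
  then have "ereal (-K) \<le> (INF fr \<in> borel_measurable M \<times> UNIV. risk P l (fst fr) (snd fr))"
    by (intro INF_greatest) auto
  moreover have "-\<infinity> < ereal (-K)" by simp
  ultimately show ?thesis by (rule order.strict_trans2[rotated])
qed

end
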